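(* Let $(H,u_1u_2u_3)$ be a lucky tracker of a graph $G$ and let $S$ be a full star-cutset of $H$. Then at least one of the following holds. (B1) For each $u_1u_2u_3$-hole $C$ of $H$, there exists a connected component $B$ of $H\setminus S$ such that $C$ is a subgraph of $H[V(B)\cup S]$. (B2) There are two non-adjacent nodes $s_1,s_2$ of $S$ and two connected components $B_1,B_2$ of $H\setminus S$ with $\{s_1,s_2\}\subseteq N_H(B_1)$ and $\{s_1,s_2\}\subseteq N_H(B_2)$.
   Context: All graphs are finite, simple and undirected. For a subgraph $B$ of $H$, $N_H(B)$ is the set of nodes outside $V(B)$ adjacent to some node of $B$. A hole is an induced simple cycle with at least four nodes; it is even if it has an even number of nodes. A shortest even hole of $H$ is an even hole of $H$ with the minimum number of nodes. For a hole $C$ of $H$ and $x\in V(H)\setminus V(C)$, let $N_C(x)=N_H(x)\cap V(C)$; $x$ is a major node if $N_C(x)$ contains three distinct pairwise non-adjacent nodes; $M_H(C)$ is the set of major nodes. $N_H^{2,2}(C)$ is the set of non-major nodes $x$ adjacent to $C$ such that $C[N_C(x)]$ has exactly two connected components, each with two nodes. $C$ is clean in $H$ if $M_H(C)=N_H^{2,2}(C)=\varnothing$. A tracker of $G$ is a pair $(H,u_1u_2u_3)$ where $H$ is an induced subgraph of $G$ and $u_1u_2u_3$ is a path on three nodes of $H$. A $u_1u_2u_3$-hole of $H$ is a clean shortest even hole $C$ of $H$ such that $u_1u_2u_3$ is a path of $C$; the tracker is lucky if $H$ has a $u_1u_2u_3$-hole. A subset $S\subseteq V(H)$ is a star-cutset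 of $H$ if $S\subseteq N_H[s]$ for some $s\in S$ (closed neighborhood) and $H\setminus S$ has more connected components than $H$; it is a full star-cutset if moreover $S=N_H[s]$ for some $s\in S$. *)

theory Defs
  imports Main
begin

(* Graphs: a vertex set V with an edge relation E (assumed symmetric and irreflexive
   where used). The subgraph considered is always the one induced on V. *)

definition adj_in :: "('a \<Rightarrow> 'a \<Rightarrow> bool) \<Rightarrow> 'a set \<Rightarrow> 'a \<Rightarrow> 'a \<Rightarrow> bool" where
  "adj_in E V x y \<longleftrightarrow> x \<in> V \<and> y \<in> V \<and> E x y"

definition components :: "('a \<Rightarrow> 'a \<Rightarrow> bool) \<Rightarrow> 'a set \<Rightarrow> 'a set set" where
  "components E V = {{y. (adj_in E V)\<^sup>*\<^sup>* x y} | x. x \<in> V}"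

definition nbhd :: "('a \<Rightarrow> 'a \<Rightarrow> bool) \<Rightarrow> 'a set \<Rightarrow> 'a set \<Rightarrow> 'a set" where
  "nbhd E V B = {v \<in> V - B. \<exists>b\<in>B. E v b}"

definition cnbhd :: "('a \<Rightarrow> 'a \<Rightarrow> bool) \<Rightarrow> 'a set \<Rightarrow> 'a \<Rightarrow> 'a set" where
  "cnbhd E V s = insert s {v \<in> V. E s v}"

definition is_hole :: "('a \<Rightarrow> 'a \<Rightarrow> bool) \<Rightarrow> 'a set \<Rightarrow> 'a list \<Rightarrow> bool" where
  "is_hole E V C \<longleftrightarrow> length C \<ge> 4 \<and> distinct C \<and> set C \<subseteq> V \<and>
     (\<forall>i<length C. \<forall>j<length C.
        E (C ! i) (C ! j) \<longleftrightarrow> (j = Suc i mod length C \<or> i = Suc j mod length C))"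

definition is_even_hole :: "('a \<Rightarrow> 'a \<Rightarrow> bool) \<Rightarrow> 'a set \<Rightarrow> 'a list \<Rightarrow> bool" where
  "is_even_hole E V C \<longleftrightarrow> is_hole E V C \<and> even (length C)"

definition is_shortest_even_hole :: "('a \<Rightarrow> 'a \<Rightarrow> bool) \<Rightarrow> 'a set \<Rightarrow> 'a list \<Rightarrow> bool" where
  "is_shortest_even_hole E V C \<longleftrightarrow> is_even_hole E V C \<and>
     (\<forall>D. is_even_hole E V D \<longrightarrow> length C \<le> length D)"

definition nbr_on :: "('a \<Rightarrow> 'a \<Rightarrow> bool) \<Rightarrow> 'a list \<Rightarrow> 'a \<Rightarrow> 'a set" where
  "nbr_on E C x = {c \<in> set C. E x c}"

definition is_major :: "('a \<Rightarrow> 'a \<Rightarrow> bool) \<Rightarrow> 'a set \<Rightarrow> 'a list \<Rightarrow> 'a \<Rightarrow> bool" where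
  "is_major E V C x \<longleftrightarrow> x \<in> V - set C \<and>
     (\<exists>a\<in>nbr_on E C x. \<exists>b\<in>nbr_on E C x. \<exists>c\<in>nbr_on E C x.
        a \<noteq> b \<and> a \<noteq> c \<and> b \<noteq> c \<and> \<not> E a b \<and> \<not> E a c \<and> \<not> E b c)"

definition is_22 :: "('a \<Rightarrow> 'a \<Rightarrow> bool) \<Rightarrow> 'a set \<Rightarrow> 'a list \<Rightarrow> 'a \<Rightarrow> bool" where
  "is_22 E V C x \<longleftrightarrow> x \<in> V - set C \<and> \<not> is_major E V C x \<and> nbr_on E C x \<noteq> {} \<and>
     card (components E (nbr_on E C x)) = 2 \<and>
     (\<forall>B\<in>components E (nbr_on E C x). card B = 2)"

definition is_clean :: "('a \<Rightarrow> 'a \<Rightarrow> bool) \<Rightarrow> 'a set \<Rightarrow> 'a list \<Rightarrow> bool" where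
  "is_clean E V C \<longleftrightarrow> (\<forall>x. \<not> is_major E V C x) \<and> (\<forall>x. \<not> is_22 E V C x)"

definition path3_of_cycle :: "'a list \<Rightarrow> 'a \<Rightarrow> 'a \<Rightarrow> 'a \<Rightarrow> bool" where
  "path3_of_cycle C u1 u2 u3 \<longleftrightarrow> (\<exists>i<length C.
     (C ! i = u1 \<and> C ! (Suc i mod length C) = u2 \<and> C ! (Suc (Suc i) mod length C) = u3) \<or>
     (C ! i = u3 \<and> C ! (Suc i mod length C) = u2 \<and> C ! (Suc (Suc i) mod length C) = u1))"

definition is_u_hole :: "('a \<Rightarrow> 'a \<Rightarrow> bool) \<Rightarrow> 'a set \<Rightarrow> 'a \<Rightarrow> 'a \<Rightarrow> 'a \<Rightarrow> 'a list \<Rightarrow> bool" where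
  "is_u_hole E V u1 u2 u3 C \<longleftrightarrow> is_clean E V C \<and> is_shortest_even_hole E V C \<and>
     path3_of_cycle C u1 u2 u3"

definition is_tracker :: "('a \<Rightarrow> 'a \<Rightarrow> bool) \<Rightarrow> 'a set \<Rightarrow> 'a set \<Rightarrow> 'a \<Rightarrow> 'a \<Rightarrow> 'a \<Rightarrow> bool" where
  "is_tracker E VG VH u1 u2 u3 \<longleftrightarrow> VH \<subseteq> VG \<and> u1 \<in> VH \<and> u2 \<in> VH \<and> u3 \<in> VH \<and>
     u1 \<noteq> u2 \<and> u2 \<noteq> u3 \<and> u1 \<noteq> u3 \<and> E u1 u2 \<and> E u2 u3"

definition lucky :: "('a \<Rightarrow> 'a \<Rightarrow> bool) \<Rightarrow> 'a set \<Rightarrow> 'a set \<Rightarrow> 'a \<Rightarrow> 'a \<Rightarrow> 'a \<Rightarrow> bool" where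
  "lucky E VG VH u1 u2 u3 \<longleftrightarrow> is_tracker E VG VH u1 u2 u3 \<and> (\<exists>C. is_u_hole E VH u1 u2 u3 C)"

definition star_cutset :: "('a \<Rightarrow> 'a \<Rightarrow> bool) \<Rightarrow> 'a set \<Rightarrow> 'a set \<Rightarrow> bool" where
  "star_cutset E V S \<longleftrightarrow> S \<subseteq> V \<and> (\<exists>s\<in>S. S \<subseteq> cnbhd E V s) \<and>
     card (components E (V - S)) > card (components E V)"

definition full_star_cutset :: "('a \<Rightarrow> 'a \<Rightarrow> bool) \<Rightarrow> 'a set \<Rightarrow> 'a set \<Rightarrow> bool" where
  "full_star_cutset E V S \<longleftrightarrow> star_cutset E V S \<and> (\<exists>s\<in>S. S = cnbhd E V s)"

end

theory Submission
  imports Defs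
begin

lemma mod_add_cancel_nat: "((a::nat) + b) mod n = (a + c) mod n \<longleftrightarrow> b mod n = c mod n"
  by (simp add: nat_mod_eq_iff)

lemma rot_adj:
  assumes "i < n" "j < n"
  shows "((r+j) mod n = Suc ((r+i) mod n) mod n) \<longleftrightarrow> (j = Suc i mod n)"
proof -
  have "Suc ((r+i) mod n) mod n = (r + Suc i) mod n" by (simp add: mod_Suc_eq)
  then have "((r+j) mod n = Suc ((r+i) mod n) mod n) \<longleftrightarrow> j mod n = Suc i mod n"
    using mod_add_cancel_nat by metis
  then show ?thesis using assms by simp
qed

lemma seg_hole:
  assumes hole: "is_hole E V D" and n: "n = length D"
    and sym: "\<And>x y. E x y \<Longrightarrow> E y x" and irr: "\<And>x. \<not> E x x"
    and s: "s \<in> V" "s \<notin> set D"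
    and m: "3 \<le> m" "m \<le> n - 1"
    and adj: "\<And>k. k < m \<Longrightarrow> E s (D!((st+k) mod n)) \<longleftrightarrow> (k = 0 \<or> k = m - 1)"
  shows "is_hole E V (s # map (\<lambda>k. D!((st+k) mod n)) [0..<m])"
proof -
  let ?f = "\<lambda>k. D!((st+k) mod n)"
  let ?L = "s # map ?f [0..<m]"
  have n4: "n \<ge> 4" and dD: "distinct D" and DV: "set D \<subseteq> V"
    and hadj: "\<And>i j. i < n \<Longrightarrow> j < n \<Longrightarrow> E (D!i) (D!j) \<longleftrightarrow> (j = Suc i mod n \<or> i = Suc j mod n)"
    using hole n unfolding is_hole_def by auto
  have np: "n > 0" using n4 by simp
  have inj: "inj_on ?f {0..<m}"
  proof (rule inj_onI)
    fix x y assume xy: "x \<in> {0..<m}" "y \<in> {0..<m}" "?f x = ?f y"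
    then have "(st+x) mod n = (st+y) mod n"
      using dD n np by (simp add: nth_eq_iff_index_eq)
    then have "x mod n = y mod n" using mod_add_cancel_nat by metis
    then show "x = y" using xy m by simp
  qed
  have fin: "?f k \<in> set D" for k using n np by simp
  have dist: "distinct ?L" using inj s(2) fin by (auto simp: distinct_map)
  have setL: "set ?L \<subseteq> V" using s(1) fin DV by auto
  have len: "length ?L = m + 1" by simp
  have core: "E (?f k1) (?f k2) \<longleftrightarrow> (k2 = Suc k1 \<or> k1 = Suc k2)" if "k1 < m" "k2 < m" for k1 k2
  proof -
    have "E (?f k1) (?f k2) \<longleftrightarrow> ((st+k2) mod n = Suc ((st+k1) mod n) mod n \<or> (st+k1) mod n = Suc ((st+k2) mod n) mod n)"
      using hadj np by simp
    also have "\<dots> \<longleftrightarrow> (k2 = Suc k1 mod n \<or> k1 = Suc k2 mod n)"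
      using rot_adj[of k1 n k2 st] rot_adj[of k2 n k1 st] that m by auto
    also have "\<dots> \<longleftrightarrow> (k2 = Suc k1 \<or> k1 = Suc k2)" using that m by auto
    finally show ?thesis .
  qed
  have "E (?L!i) (?L!j) \<longleftrightarrow> (j = Suc i mod (m+1) \<or> i = Suc j mod (m+1))" if "i < m+1" "j < m+1" for i j
  proof (cases i)
    case 0
    then show ?thesis
    proof (cases j)
      case 0 then show ?thesis using \<open>i = 0\<close> irr m by simp
    next
      case (Suc k)
      have "E s (?f k) \<longleftrightarrow> (k = 0 \<or> k = m - 1)" using adj that Suc by simp
      moreover have "(Suc k = Suc 0 mod (m+1) \<or> 0 = Suc (Suc k) mod (m+1)) \<longleftrightarrow> (k = 0 \<or> k = m - 1)"
        using that Suc m by (auto simp: mod_Suc)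
      ultimately show ?thesis using 0 Suc that by simp
    qed
  next
    case (Suc k1)
    then show ?thesis
    proof (cases j)
      case 0
      have "E s (?f k1) \<longleftrightarrow> (k1 = 0 \<or> k1 = m - 1)" using adj that Suc by simp
      then have "E (?f k1) s \<longleftrightarrow> (k1 = 0 \<or> k1 = m - 1)" using sym by blast
      moreover have "(Suc k1 = Suc 0 mod (m+1) \<or> 0 = Suc (Suc k1) mod (m+1)) \<longleftrightarrow> (k1 = 0 \<or> k1 = m - 1)"
        using that Suc m by (auto simp: mod_Suc)
      ultimately show ?thesis using 0 Suc that by auto
    next
      case (Suc k2)
      have "E (?f k1) (?f k2) \<longleftrightarrow> (k2 = Suc k1 \<or> k1 = Suc k2)" using core that Suc \<open>i = Suc k1\<close> by simp
      moreover have "(Suc k2 = Suc (Suc k1) mod (m+1) \<or> Suc k1 = Suc (Suc k2) mod (m+1)) \<longleftrightarrow> (k2 = Suc k1 \<or> k1 = Suc k2)"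
        using that Suc \<open>i = Suc k1\<close> m by (auto simp: mod_Suc)
      ultimately show ?thesis using \<open>i = Suc k1\<close> Suc that by simp
    qed
  qed
  then show ?thesis unfolding is_hole_def using len dist setL m by auto
qed


lemma tri_contra:
  assumes hole: "is_hole E V D" and n: "n = length D" and ev: "even n"
    and short: "\<forall>D'. is_even_hole E V D' \<longrightarrow> n \<le> length D'"
    and sym: "\<And>x y. E x y \<Longrightarrow> E y x" and irr: "\<And>x. \<not> E x x"
    and s: "s \<in> V" "s \<notin> set D"
    and p: "p < n" and d: "2 \<le> d" "d \<le> n - 3"
    and adjs: "\<And>k. k < n \<Longrightarrow> E s (D!k) \<longleftrightarrow> (k = p \<or> k = Suc p mod n \<or> k = (Suc p + d) mod n)"
  shows False
proof -
  have n4: "n \<ge> 4" using hole n unfolding is_hole_def by auto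
  have np: "0 < n" using n4 by simp
  have c: "(p + a) mod n = (p + b) mod n \<longleftrightarrow> a mod n = b mod n" for a b
    using mod_add_cancel_nat by blast
  have pm: "p = (p + 0) mod n" using p by simp
  have h1: "is_hole E V (s # map (\<lambda>k. D!((Suc p+k) mod n)) [0..<d+1])"
  proof (rule seg_hole[OF hole n sym irr s])
    show "3 \<le> d + 1" "d + 1 \<le> n - 1" using d by auto
    fix k assume k: "k < d + 1"
    have a1: "(Suc p + k) mod n \<noteq> p"
    proof
      assume "(Suc p + k) mod n = p"
      then have "(p + Suc k) mod n = (p + 0) mod n" using pm by simp
      then have "Suc k mod n = 0 mod n" using c by blast
      then show False using k d by simp
    qed
    have a2: "(Suc p + k) mod n = Suc p mod n \<longleftrightarrow> k = 0"
    proof -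
      have "(Suc p + k) mod n = Suc p mod n \<longleftrightarrow> (Suc p + k) mod n = (Suc p + 0) mod n" by simp
      also have "\<dots> \<longleftrightarrow> k mod n = 0 mod n" using mod_add_cancel_nat by blast
      finally show ?thesis using k d by simp
    qed
    have a3: "(Suc p + k) mod n = (Suc p + d) mod n \<longleftrightarrow> k = d"
    proof -
      have "(Suc p + k) mod n = (Suc p + d) mod n \<longleftrightarrow> k mod n = d mod n" using mod_add_cancel_nat by blast
      then show ?thesis using k d by simp
    qed
    show "E s (D!((Suc p+k) mod n)) \<longleftrightarrow> (k = 0 \<or> k = d + 1 - 1)"
      using adjs[of "(Suc p + k) mod n"] np a1 a2 a3 by auto
  qed
  have h2: "is_hole E V (s # map (\<lambda>k. D!((Suc p + d + k) mod n)) [0..<n-d])"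
  proof (rule seg_hole[OF hole n sym irr s])
    show "3 \<le> n - d" "n - d \<le> n - 1" using d by auto
    fix k assume k: "k < n - d"
    have a1: "(Suc p + d + k) mod n = p \<longleftrightarrow> k = n - d - 1"
    proof -
      have "(Suc p + d + k) mod n = p \<longleftrightarrow> (p + Suc (d + k)) mod n = (p + 0) mod n" using p by (simp add: add.assoc)
      also have "\<dots> \<longleftrightarrow> Suc (d + k) mod n = 0 mod n" using c by blast
      also have "\<dots> \<longleftrightarrow> Suc (d+k) = n" using k d
        by (cases "Suc (d+k) = n") auto
      finally show ?thesis using k d by auto
    qed
    have a2: "(Suc p + d + k) mod n \<noteq> Suc p mod n"
    proof
      assume "(Suc p + d + k) mod n = Suc p mod n"
      then have "(Suc p + (d + k)) mod n = (Suc p + 0) mod n" by (simp add: add.assoc)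
      then have "(d + k) mod n = 0 mod n" using mod_add_cancel_nat by blast
      then show False using k d by simp
    qed
    have a3: "(Suc p + d + k) mod n = (Suc p + d) mod n \<longleftrightarrow> k = 0"
    proof -
      have "(Suc p + d + k) mod n = (Suc p + d + 0) mod n \<longleftrightarrow> k mod n = 0 mod n" using mod_add_cancel_nat by blast
      then show ?thesis using k d by simp
    qed
    show "E s (D!((Suc p + d + k) mod n)) \<longleftrightarrow> (k = 0 \<or> k = n - d - 1)"
      using adjs[of "(Suc p + d + k) mod n"] np a1 a2 a3 by auto
  qed
  have "even (d + 2) \<or> even (n - d + 1)" using ev d by auto
  then show False
  proof
    assume "even (d+2)"
    then have "is_even_hole E V (s # map (\<lambda>k. D!((Suc p+k) mod n)) [0..<d+1])"
      using h1 by (simp add: is_even_hole_def)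
    then show False using short d by fastforce
  next
    assume "even (n - d + 1)"
    then have "is_even_hole E V (s # map (\<lambda>k. D!((Suc p + d + k) mod n)) [0..<n-d])"
      using h2 d by (simp add: is_even_hole_def Suc_diff_le)
    then show False using short d by fastforce
  qed
qed


lemma reach_in:
  assumes "(adj_in E W)\<^sup>*\<^sup>* x z" "x \<in> W" shows "z \<in> W"
  using assms by (induction rule: rtranclp_induct) (auto simp: adj_in_def)

lemma reach_sym:
  assumes "\<And>x y. E x y \<Longrightarrow> E y x" "(adj_in E W)\<^sup>*\<^sup>* x z" shows "(adj_in E W)\<^sup>*\<^sup>* z x"
proof -
  have "symp (adj_in E W)" using assms(1) by (auto simp: symp_def adj_in_def)
  then have "symp ((adj_in E W)\<^sup>*\<^sup>*)" by (rule symp_rtranclp)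
  then show ?thesis using assms(2) by (auto simp: symp_def)
qed

lemma reach_closed:
  assumes "(adj_in E W)\<^sup>*\<^sup>* x z" "x \<in> A" "\<And>u w. u \<in> A \<Longrightarrow> w \<in> W \<Longrightarrow> E u w \<Longrightarrow> w \<in> A"
  shows "z \<in> A"
  using assms by (induction rule: rtranclp_induct) (auto simp: adj_in_def)

lemma path_conn:
  assumes hole: "is_hole E V D" and n: "n = length D"
    and ns: "\<And>k. u \<le> k \<Longrightarrow> k \<le> v \<Longrightarrow> D!k \<notin> S" and uv: "u \<le> v" "v < n"
  shows "(adj_in E (V - S))\<^sup>*\<^sup>* (D!u) (D!v)"
  using uv ns
proof (induction v)
  case 0 then show ?case by simp
next
  case (Suc v)
  show ?case
  proof (cases "u = Suc v")
    case True then show ?thesis by simp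
  next
    case False
    then have IH: "(adj_in E (V - S))\<^sup>*\<^sup>* (D!u) (D!v)" using Suc by auto
    have "E (D!v) (D!Suc v)" using hole n Suc.prems unfolding is_hole_def by auto
    moreover have "D!v \<in> V" "D!Suc v \<in> V" using hole n Suc.prems unfolding is_hole_def by auto
    moreover have "D!v \<notin> S" "D!Suc v \<notin> S" using Suc.prems False by auto
    ultimately have "adj_in E (V - S) (D!v) (D!Suc v)" by (simp add: adj_in_def)
    then show ?thesis using IH by (meson rtranclp.rtrancl_into_rtrancl)
  qed
qed

lemma comp22:
  assumes sym: "\<And>x y. E x y \<Longrightarrow> E y x"
    and N: "N = {p1, p2, q1, q2}" and d: "p1 \<noteq> p2" "q1 \<noteq> q2"
    and dis: "{p1,p2} \<inter> {q1,q2} = {}"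
    and e: "E p1 p2" "E q1 q2"
    and ne: "\<And>u w. u \<in> {p1,p2} \<Longrightarrow> w \<in> {q1,q2} \<Longrightarrow> \<not> E u w"
  shows "components E N = {{p1,p2},{q1,q2}}"
proof -
  have cl: "{y. (adj_in E N)\<^sup>*\<^sup>* x y} = A"
    if A: "A = {r1, r2}" "E r1 r2" "x \<in> A" "\<And>u w. u \<in> A \<Longrightarrow> w \<in> N \<Longrightarrow> E u w \<Longrightarrow> w \<in> A"
      "A \<subseteq> N" for A r1 r2 x
  proof
    show "{y. (adj_in E N)\<^sup>*\<^sup>* x y} \<subseteq> A" using reach_closed[of E N x _ A] A by blast
    have "adj_in E N r1 r2" "adj_in E N r2 r1" using A sym by (auto simp: adj_in_def)
    then show "A \<subseteq> {y. (adj_in E N)\<^sup>*\<^sup>* x y}" using A by auto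
  qed
  have clP: "{y. (adj_in E N)\<^sup>*\<^sup>* x y} = {p1,p2}" if "x \<in> {p1,p2}" for x
    by (rule cl[of _ p1 p2]) (use that N e ne sym in auto)
  have clQ: "{y. (adj_in E N)\<^sup>*\<^sup>* x y} = {q1,q2}" if "x \<in> {q1,q2}" for x
    by (rule cl[of _ q1 q2]) (use that N e ne sym in \<open>auto\<close>)
  show ?thesis unfolding components_def
  proof (intro equalityI subsetI)
    fix B assume "B \<in> {{y. (adj_in E N)\<^sup>*\<^sup>* x y} |x. x \<in> N}"
    then obtain x where "x \<in> N" "B = {y. (adj_in E N)\<^sup>*\<^sup>* x y}" by blast
    then show "B \<in> {{p1,p2},{q1,q2}}" using clP clQ N by auto
  next
    fix B assume "B \<in> {{p1,p2},{q1,q2}}"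
    then show "B \<in> {{y. (adj_in E N)\<^sup>*\<^sup>* x y} |x. x \<in> N}"
      using clP[of p1] clQ[of q1] N by auto
  qed
qed


lemma core:
  assumes hole: "is_hole E VH D" and n: "n = length D" and ev: "even n"
    and short: "\<forall>D'. is_even_hole E VH D' \<longrightarrow> n \<le> length D'"
    and sym: "\<And>x y. E x y \<Longrightarrow> E y x" and irr: "\<And>x. \<not> E x x"
    and nmaj: "\<not> is_major E VH D s" and n22: "\<not> is_22 E VH D s"
    and Sdef: "S = cnbhd E VH s" and sV: "s \<in> VH"
    and x0: "D!0 \<notin> S" and j: "0 < j" "j < n" "D!j \<notin> S"
    and nc: "\<not> (adj_in E (VH - S))\<^sup>*\<^sup>* (D!0) (D!j)"
  shows "\<exists>s1\<in>S. \<exists>s2\<in>S. s1 \<noteq> s2 \<and> \<not> E s1 s2 \<and>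
            (\<exists>B1\<in>components E (VH - S). \<exists>B2\<in>components E (VH - S). B1 \<noteq> B2 \<and>
               {s1, s2} \<subseteq> nbhd E VH B1 \<and> {s1, s2} \<subseteq> nbhd E VH B2)"
proof -
  let ?R = "(adj_in E (VH - S))\<^sup>*\<^sup>*"
  have n4: "n \<ge> 4" and dD: "distinct D" and DV: "set D \<subseteq> VH"
    and hadj: "\<And>i j. i < n \<Longrightarrow> j < n \<Longrightarrow> E (D!i) (D!j) \<longleftrightarrow> (j = Suc i mod n \<or> i = Suc j mod n)"
    using hole n unfolding is_hole_def by auto
  have DkV: "k < n \<Longrightarrow> D!k \<in> VH" for k using DV n by auto
  have inS: "k < n \<Longrightarrow> D!k \<in> S \<longleftrightarrow> D!k = s \<or> E s (D!k)" for k
    using DkV Sdef by (auto simp: cnbhd_def)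
  have SV: "S \<subseteq> VH" using Sdef sV by (auto simp: cnbhd_def)
  have sS: "s \<in> S" using Sdef by (simp add: cnbhd_def)
  have inj: "i < n \<Longrightarrow> k < n \<Longrightarrow> D!i = D!k \<longleftrightarrow> i = k" for i k
    using dD n by (simp add: nth_eq_iff_index_eq)
  have cross: "\<not> E (D!k1) (D!k2) \<and> D!k1 \<noteq> D!k2" if "0 < k1" "k1 < j" "j < k2" "k2 < n" for k1 k2
  proof -
    have "\<not> (k2 = Suc k1 mod n \<or> k1 = Suc k2 mod n)"
      using that j by (auto simp: mod_Suc split: if_splits)
    then show ?thesis using hadj[of k1 k2] inj[of k1 k2] that j by auto
  qed
  have edge: "E (D!k) (D!(Suc k mod n))" if "k < n" for k
    using hadj[of k "Suc k mod n"] that n4 by simp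
  define A1 where "A1 = {k. 0 < k \<and> k < j \<and> D!k \<in> S}"
  define A2 where "A2 = {k. j < k \<and> k < n \<and> D!k \<in> S}"
  have fA1: "finite A1" unfolding A1_def by simp
  have fA2: "finite A2" unfolding A2_def by simp
  have A1ne: "A1 \<noteq> {}"
  proof
    assume "A1 = {}"
    have ns: "D!k \<notin> S" if "0 \<le> k" "k \<le> j" for k
    proof (cases "k = 0 \<or> k = j")
      case True then show ?thesis using x0 j by auto
    next
      case False then have "0 < k" "k < j" using that by auto
      then show ?thesis using \<open>A1 = {}\<close> unfolding A1_def by blast
    qed
    have "?R (D!0) (D!j)" by (rule path_conn[OF hole n]) (use ns j in auto)
    then show False using nc by simp
  qed
  have A2ne: "A2 \<noteq> {}"
  proof
    assume "A2 = {}"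
    have ns: "D!k \<notin> S" if "j \<le> k" "k \<le> n - 1" for k
    proof (cases "k = j")
      case True then show ?thesis using j by auto
    next
      case False then have "j < k" "k < n" using that j by auto
      then show ?thesis using \<open>A2 = {}\<close> unfolding A2_def by blast
    qed
    have "?R (D!j) (D!(n-1))" by (rule path_conn[OF hole n]) (use ns j in auto)
    moreover have "adj_in E (VH - S) (D!(n-1)) (D!0)"
    proof -
      have "D!(n-1) \<notin> S" using ns j by auto
      moreover have "E (D!(n-1)) (D!0)" using edge[of "n-1"] n4 by simp
      ultimately show ?thesis using DkV[of "n-1"] DkV[of 0] x0 n4 by (simp add: adj_in_def)
    qed
    ultimately have "?R (D!j) (D!0)" by (meson rtranclp.rtrancl_into_rtrancl)
    then show False using nc reach_sym[where E=E and W="VH - S", OF sym] by blast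
  qed
  have snD: "s \<notin> set D"
  proof
    assume "s \<in> set D"
    then obtain t where t: "t < n" "D!t = s" using n by (auto simp: in_set_conv_nth)
    have t0: "t \<noteq> 0" using t(2) x0 sS by metis
    have tj: "t \<noteq> j" using t(2) j(3) sS by metis
    from t0 tj
    consider "0 < t" "t < j" | "j < t" by linarith
    then show False
    proof cases
      case 1
      obtain k2 where "k2 \<in> A2" using A2ne by blast
      then have k2: "j < k2" "k2 < n" "D!k2 = s \<or> E s (D!k2)" using inS unfolding A2_def by auto
      then show False using cross[of t k2] 1 t by auto
    next
      case 2
      obtain k1 where "k1 \<in> A1" using A1ne by blast
      then have k1: "0 < k1" "k1 < j" "D!k1 = s \<or> E s (D!k1)" using inS j unfolding A1_def by auto
      then have "D!k1 = D!t \<or> E (D!k1) (D!t)" using t(2) sym by metis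
      then show False using cross[of k1 t] 2 t k1 by auto
    qed
  qed
  have inS2: "k < n \<Longrightarrow> D!k \<in> S \<longleftrightarrow> E s (D!k)" for k
    using inS snD n by auto
  define a where "a = Min A1"
  define a' where "a' = Max A1"
  define b where "b = Min A2"
  define b' where "b' = Max A2"
  have aA: "a \<in> A1" "a' \<in> A1" using fA1 A1ne a_def a'_def by auto
  have bA: "b \<in> A2" "b' \<in> A2" using fA2 A2ne b_def b'_def by auto
  have A1r: "k \<in> A1 \<Longrightarrow> a \<le> k \<and> k \<le> a'" for k using fA1 a_def a'_def by auto
  have A2r: "k \<in> A2 \<Longrightarrow> b \<le> k \<and> k \<le> b'" for k using fA2 b_def b'_def by auto
  have ar: "0 < a" "a \<le> a'" "a' < j" using aA A1r unfolding A1_def by auto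
  have br: "j < b" "b \<le> b'" "b' < n" using bA A2r unfolding A2_def by auto
  define Bx where "Bx = {z. ?R (D!0) z}"
  define By where "By = {z. ?R (D!j) z}"
  have x0V: "D!0 \<in> VH - S" "D!j \<in> VH - S" using DkV[of 0] DkV[of j] x0 j n4 by auto
  have BxC: "Bx \<in> components E (VH - S)" unfolding Bx_def components_def using x0V by blast
  have ByC: "By \<in> components E (VH - S)" unfolding By_def components_def using x0V by blast
  have Bne: "Bx \<noteq> By" using nc unfolding Bx_def By_def by auto
  have nb: "v \<in> nbhd E VH B" if "v \<in> S" "w \<in> B" "E v w" "B = {z. ?R y z}" "y \<in> VH - S" for v w B y
  proof -
    have "v \<notin> B"
    proof
      assume "v \<in> B"
      then have "?R y v" using that(4) by simp
      then have "v \<in> VH - S" using reach_in that(5) by metis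
      then show False using that(1) by simp
    qed
    then show ?thesis unfolding nbhd_def using that(1-3) SV by blast
  qed
  have "?R (D!0) (D!(a-1))"
  proof (rule path_conn[OF hole n])
    fix k assume k: "0 \<le> k" "k \<le> a - 1"
    show "D!k \<notin> S"
    proof (cases "k = 0")
      case True then show ?thesis using x0 by simp
    next
      case False
      then have "k \<notin> A1" using A1r[of k] k ar by auto
      then show ?thesis using False k ar unfolding A1_def by auto
    qed
  qed (use ar j in auto)
  moreover have "E (D!a) (D!(a-1))"
  proof -
    have "E (D!(a-1)) (D!(Suc (a-1) mod n))" using edge[of "a-1"] ar j by auto
    moreover have "Suc (a-1) mod n = a" using ar j by simp
    ultimately show ?thesis using sym by metis
  qed
  ultimately have aN: "D!a \<in> nbhd E VH Bx"
    using nb[of "D!a" "D!(a-1)" Bx "D!0"] aA x0V unfolding A1_def Bx_def by auto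
  have "?R (D!(Suc a')) (D!j)"
  proof (rule path_conn[OF hole n])
    fix k assume k: "Suc a' \<le> k" "k \<le> j"
    show "D!k \<notin> S"
    proof (cases "k = j")
      case True then show ?thesis using j by simp
    next
      case False
      then have "k \<notin> A1" using A1r[of k] k ar by auto
      then show ?thesis using False k ar unfolding A1_def by auto
    qed
  qed (use ar j in auto)
  then have "?R (D!j) (D!(Suc a'))" using reach_sym[where E=E and W="VH - S", OF sym] by blast
  moreover have "E (D!a') (D!(Suc a'))" using edge[of "a'"] ar j by auto
  ultimately have a'N: "D!a' \<in> nbhd E VH By"
    using nb[of "D!a'" "D!(Suc a')" By "D!j"] aA x0V unfolding A1_def By_def by auto
  have "?R (D!j) (D!(b-1))"
  proof (rule path_conn[OF hole n])
    fix k assume k: "j \<le> k" "k \<le> b - 1"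
    show "D!k \<notin> S"
    proof (cases "k = j")
      case True then show ?thesis using j by simp
    next
      case False
      then have "k \<notin> A2" using A2r[of k] k br by auto
      then show ?thesis using False k br unfolding A2_def by auto
    qed
  qed (use br j in auto)
  moreover have "E (D!b) (D!(b-1))"
  proof -
    have "E (D!(b-1)) (D!(Suc (b-1) mod n))" using edge[of "b-1"] br j by auto
    moreover have "Suc (b-1) mod n = b" using br j by simp
    ultimately show ?thesis using sym by metis
  qed
  ultimately have bN: "D!b \<in> nbhd E VH By"
    using nb[of "D!b" "D!(b-1)" By "D!j"] bA x0V unfolding A2_def By_def by auto
  have "?R (D!0) (D!(Suc b' mod n))"
  proof (cases "b' = n - 1")
    case True then show ?thesis using n4 by simp
  next
    case False
    have "?R (D!(Suc b')) (D!(n-1))"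
    proof (rule path_conn[OF hole n])
      fix k assume k: "Suc b' \<le> k" "k \<le> n - 1"
      then have "k \<notin> A2" using A2r[of k] by auto
      then show "D!k \<notin> S" using k br unfolding A2_def by auto
    qed (use br False in auto)
    moreover have "adj_in E (VH - S) (D!(n-1)) (D!0)"
    proof -
      have "n - 1 \<notin> A2" using A2r[of "n-1"] br False by auto
      then have "D!(n-1) \<notin> S" using br unfolding A2_def by auto
      moreover have "E (D!(n-1)) (D!0)" using edge[of "n-1"] n4 by simp
      ultimately show ?thesis using DkV[of "n-1"] DkV[of 0] x0 n4 by (simp add: adj_in_def)
    qed
    ultimately have "?R (D!(Suc b')) (D!0)" by (meson rtranclp.rtrancl_into_rtrancl)
    then show ?thesis using reach_sym[where E=E and W="VH - S", OF sym] False br by auto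
  qed
  then have b'N: "D!b' \<in> nbhd E VH Bx"
    using nb[of "D!b'" "D!(Suc b' mod n)" Bx "D!0"] bA edge[of "b'"] br x0V unfolding A2_def Bx_def
    by blast
  have inNb: "k < n \<Longrightarrow> D!k \<in> S \<Longrightarrow> D!k \<in> nbr_on E D s" for k
    using inS2 n by (auto simp: nbr_on_def)
  have sVD: "s \<in> VH - set D" using sV snD by simp
  have nonadj_in: "\<not> E (D!k1) (D!k2) \<and> D!k1 \<noteq> D!k2" if "k1 < k2" "k2 < n - 1" "Suc k1 < k2" for k1 k2
  proof -
    have "\<not> (k2 = Suc k1 mod n \<or> k1 = Suc k2 mod n)" using that by auto
    then show ?thesis using hadj[of k1 k2] inj[of k1 k2] that by auto
  qed
  have aa: "a' = a \<or> a' = Suc a"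
  proof (rule ccontr)
    assume "\<not> ?thesis"
    then have "Suc a < a'" using ar by auto
    have m: "D!a \<in> nbr_on E D s" "D!a' \<in> nbr_on E D s" "D!b \<in> nbr_on E D s"
      using inNb[of a] inNb[of a'] inNb[of b] aA bA ar br j unfolding A1_def A2_def by auto
    have x: "\<not> E (D!a) (D!a') \<and> D!a \<noteq> D!a'" using nonadj_in[of a a'] \<open>Suc a < a'\<close> ar j by auto
    have y: "\<not> E (D!a) (D!b) \<and> D!a \<noteq> D!b" "\<not> E (D!a') (D!b) \<and> D!a' \<noteq> D!b"
      using cross[of a b] cross[of a' b] ar br by auto
    have "is_major E VH D s"
      unfolding is_major_def using sVD m x y by blast
    then show False using nmaj by simp
  qed
  have bb: "b' = b \<or> b' = Suc b"
  proof (rule ccontr)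
    assume "\<not> ?thesis"
    then have "Suc b < b'" using br by auto
    have m: "D!a \<in> nbr_on E D s" "D!b' \<in> nbr_on E D s" "D!b \<in> nbr_on E D s"
      using inNb[of a] inNb[of b'] inNb[of b] aA bA ar br j unfolding A1_def A2_def by auto
    have "b' < n - 1 \<or> b' = n - 1" using br by auto
    then have x: "\<not> E (D!b) (D!b') \<and> D!b \<noteq> D!b'"
    proof
      assume "b' < n - 1" then show ?thesis using nonadj_in[of b b'] \<open>Suc b < b'\<close> by auto
    next
      assume e: "b' = n - 1"
      have "\<not> (b' = Suc b mod n \<or> b = Suc b' mod n)" using e \<open>Suc b < b'\<close> br j by auto
      then show ?thesis using hadj[of b b'] inj[of b b'] br \<open>Suc b < b'\<close> by auto
    qed
    have y: "\<not> E (D!a) (D!b) \<and> D!a \<noteq> D!b" "\<not> E (D!a) (D!b') \<and> D!a \<noteq> D!b'"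
      using cross[of a b] cross[of a b'] ar br by auto
    have "is_major E VH D s"
      unfolding is_major_def using sVD m x y by blast
    then show False using nmaj by simp
  qed
  have adjs: "k < n \<Longrightarrow> E s (D!k) \<longleftrightarrow> k \<in> A1 \<or> k \<in> A2" for k
    using inS2[of k] x0 j unfolding A1_def A2_def
    by (cases "k = 0"; cases "k = j") auto
  show ?thesis
  proof (cases "a' = a")
    case T1: True
    show ?thesis
    proof (cases "b' = b")
      case True
      show ?thesis
        apply (rule bexI[of _ "D!a"], rule bexI[of _ "D!b"])
        using cross[of a b] ar br BxC ByC Bne aN a'N bN b'N T1 True aA bA
        unfolding A1_def A2_def by auto
    next
      case False
      then have bb': "b' = Suc b" using bb by simp
      have adj1: "\<And>k. k < n \<Longrightarrow> E s (D!k) \<longleftrightarrow> (k = b \<or> k = Suc b mod n \<or> k = (Suc b + (n + a - b - 1)) mod n)"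
      proof -
        fix k assume k: "k < n"
        have e1: "Suc b mod n = Suc b" using br bb' by simp
        have e2: "(Suc b + (n + a - b - 1)) mod n = a" using br ar j by simp
        show "E s (D!k) \<longleftrightarrow> (k = b \<or> k = Suc b mod n \<or> k = (Suc b + (n + a - b - 1)) mod n)"
          unfolding e1 e2 using adjs[OF k] A1r A2r T1 bb' aA bA by fastforce
      qed
      have False
        by (rule tri_contra[OF hole n ev short sym irr sV snD, of b "n + a - b - 1"])
          (use br ar j bb' adj1 in auto)
      then show ?thesis ..
    qed
  next
    case False
    then have aa': "a' = Suc a" using aa by simp
    show ?thesis
    proof (cases "b' = b")
      case True
      have adj1: "\<And>k. k < n \<Longrightarrow> E s (D!k) \<longleftrightarrow> (k = a \<or> k = Suc a mod n \<or> k = (Suc a + (b - a - 1)) mod n)"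
      proof -
        fix k assume k: "k < n"
        have e1: "Suc a mod n = Suc a" using ar aa' j by simp
        have e2: "(Suc a + (b - a - 1)) mod n = b" using br ar j by simp
        show "E s (D!k) \<longleftrightarrow> (k = a \<or> k = Suc a mod n \<or> k = (Suc a + (b - a - 1)) mod n)"
          unfolding e1 e2 using adjs[OF k] A1r A2r True aa' aA bA by fastforce
      qed
      have False
        by (rule tri_contra[OF hole n ev short sym irr sV snD, of a "b - a - 1"])
          (use br ar j aa' adj1 in auto)
      then show ?thesis ..
    next
      case False
      then have bb': "b' = Suc b" using bb by simp
      have Nset: "nbr_on E D s = {D!a, D!Suc a, D!b, D!Suc b}"
      proof
        show "nbr_on E D s \<subseteq> {D!a, D!Suc a, D!b, D!Suc b}"
        proof
          fix c assume "c \<in> nbr_on E D s"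
          then obtain k where k: "k < n" "c = D!k" "E s c" using n by (auto simp: nbr_on_def in_set_conv_nth)
          then have "k \<in> A1 \<or> k \<in> A2" using adjs by auto
          then have "k = a \<or> k = Suc a \<or> k = b \<or> k = Suc b"
          proof
            assume "k \<in> A1" then have "a \<le> k" "k \<le> Suc a" using A1r aa' by auto
            then show ?thesis by auto
          next
            assume "k \<in> A2" then have "b \<le> k" "k \<le> Suc b" using A2r bb' by auto
            then show ?thesis by auto
          qed
          then show "c \<in> {D!a, D!Suc a, D!b, D!Suc b}" using k(2) by auto
        qed
        show "{D!a, D!Suc a, D!b, D!Suc b} \<subseteq> nbr_on E D s"
          using inNb aA bA aa' bb' unfolding A1_def A2_def by auto
      qed
      have comps: "components E (nbr_on E D s) = {{D!a, D!Suc a}, {D!b, D!Suc b}}"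
      proof (rule comp22[OF sym Nset])
        show "D!a \<noteq> D!Suc a" "D!b \<noteq> D!Suc b" using inj ar br aa' bb' by auto
        show "{D!a, D!Suc a} \<inter> {D!b, D!Suc b} = {}"
          using cross[of a b] cross[of "Suc a" b] cross[of a "Suc b"] cross[of "Suc a" "Suc b"] ar br aa' bb' by auto
        show "E (D!a) (D!Suc a)" "E (D!b) (D!Suc b)" using edge[of a] edge[of b] ar br aa' bb' j by auto
        fix u w assume "u \<in> {D!a, D!Suc a}" "w \<in> {D!b, D!Suc b}"
        then show "\<not> E u w"
          using cross[of a b] cross[of "Suc a" b] cross[of a "Suc b"] cross[of "Suc a" "Suc b"] ar br aa' bb' by auto
      qed
      have ne: "{D!a, D!Suc a} \<noteq> {D!b, D!Suc b}"
      proof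
        assume "{D!a, D!Suc a} = {D!b, D!Suc b}"
        then have "D!b \<in> {D!a, D!Suc a}" by blast
        then show False using cross[of a b] cross[of "Suc a" b] ar br aa' bb' by auto
      qed
      have c2: "card {D!a, D!Suc a} = 2" "card {D!b, D!Suc b} = 2" using inj ar br aa' bb' by auto
      have "is_22 E VH D s"
        unfolding is_22_def using sVD nmaj comps ne c2 Nset by auto
      then show ?thesis using n22 by simp
    qed
  qed
qed


lemma hole_rotate:
  assumes "is_hole E V C" "r < length C"
  shows "is_hole E V (rotate r C)" "rotate r C ! 0 = C ! r"
proof -
  let ?n = "length C"
  have n4: "?n \<ge> 4" using assms unfolding is_hole_def by auto
  show "rotate r C ! 0 = C ! r" using assms n4 by (subst nth_rotate) auto
  have "E (rotate r C ! i) (rotate r C ! j) \<longleftrightarrow> (j = Suc i mod ?n \<or> i = Suc j mod ?n)"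
    if "i < ?n" "j < ?n" for i j
  proof -
    have "E (rotate r C ! i) (rotate r C ! j) \<longleftrightarrow> E (C ! ((r+i) mod ?n)) (C ! ((r+j) mod ?n))"
      using that by (simp add: nth_rotate)
    also have "\<dots> \<longleftrightarrow> ((r+j) mod ?n = Suc ((r+i) mod ?n) mod ?n \<or> (r+i) mod ?n = Suc ((r+j) mod ?n) mod ?n)"
    proof -
      have np: "0 < ?n" using n4 by linarith
      have lt: "(r+i) mod ?n < ?n" "(r+j) mod ?n < ?n" using mod_less_divisor[OF np] by blast+
      then show ?thesis using assms(1) unfolding is_hole_def by blast
    qed
    also have "\<dots> \<longleftrightarrow> (j = Suc i mod ?n \<or> i = Suc j mod ?n)"
      using rot_adj that by metis
    finally show ?thesis .
  qed
  then show "is_hole E V (rotate r C)" using assms unfolding is_hole_def by auto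
qed

theorem lemma16:
  fixes E :: "'a \<Rightarrow> 'a \<Rightarrow> bool" and VG VH S :: "'a set" and u1 u2 u3 :: 'a
  assumes "finite VG"
    and "\<And>x y. E x y \<Longrightarrow> E y x"
    and "\<And>x. \<not> E x x"
    and "lucky E VG VH u1 u2 u3"
    and "full_star_cutset E VH S"
  shows "(\<forall>C. is_u_hole E VH u1 u2 u3 C \<longrightarrow>
            (\<exists>B\<in>components E (VH - S). set C \<subseteq> B \<union> S))
       \<or> (\<exists>s1\<in>S. \<exists>s2\<in>S. s1 \<noteq> s2 \<and> \<not> E s1 s2 \<and>
            (\<exists>B1\<in>components E (VH - S). \<exists>B2\<in>components E (VH - S). B1 \<noteq> B2 \<and>
               {s1, s2} \<subseteq> nbhd E VH B1 \<and> {s1, s2} \<subseteq> nbhd E VH B2))"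
proof (rule disjCI)
  let ?R = "(adj_in E (VH - S))\<^sup>*\<^sup>*"
  note sym = assms(2) and irr = assms(3)
  assume nB2: "\<not> (\<exists>s1\<in>S. \<exists>s2\<in>S. s1 \<noteq> s2 \<and> \<not> E s1 s2 \<and>
            (\<exists>B1\<in>components E (VH - S). \<exists>B2\<in>components E (VH - S). B1 \<noteq> B2 \<and>
               {s1, s2} \<subseteq> nbhd E VH B1 \<and> {s1, s2} \<subseteq> nbhd E VH B2))"
  from assms(5) obtain s where sS: "s \<in> S" "S = cnbhd E VH s" and SV: "S \<subseteq> VH"
    and card: "card (components E (VH - S)) > card (components E VH)"
    unfolding full_star_cutset_def star_cutset_def by blast
  have sV: "s \<in> VH" using sS SV by blast
  show "\<forall>C. is_u_hole E VH u1 u2 u3 C \<longrightarrow> (\<exists>B\<in>components E (VH - S). set C \<subseteq> B \<union> S)"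
  proof (intro allI impI)
    fix C assume uh: "is_u_hole E VH u1 u2 u3 C"
    then have hole: "is_hole E VH C" and ev: "even (length C)"
      and short: "\<forall>D. is_even_hole E VH D \<longrightarrow> length C \<le> length D"
      and nmaj: "\<not> is_major E VH C s" and n22: "\<not> is_22 E VH C s"
      unfolding is_u_hole_def is_shortest_even_hole_def is_even_hole_def is_clean_def by auto
    have CV: "set C \<subseteq> VH" using hole unfolding is_hole_def by auto
    show "\<exists>B\<in>components E (VH - S). set C \<subseteq> B \<union> S"
    proof (cases "set C \<subseteq> S")
      case True
      have "VH - S \<noteq> {}"
      proof
        assume "VH - S = {}"
        then have "components E (VH - S) = {}" unfolding components_def by auto
        then show False using card by simp
      qed
      then obtain v where "v \<in> VH - S" by blast
      then have "{z. ?R v z} \<in> components E (VH - S)" unfolding components_def by blast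
      then show ?thesis using True by blast
    next
      case False
      then obtain x where x: "x \<in> set C" "x \<notin> S" by blast
      have xV: "x \<in> VH - S" using x CV by blast
      have BxC: "{z. ?R x z} \<in> components E (VH - S)" unfolding components_def using xV by blast
      show ?thesis
      proof (rule ccontr)
        assume nB: "\<not> ?thesis"
        then have "\<not> set C \<subseteq> {z. ?R x z} \<union> S" using BxC by blast
        then obtain y where y: "y \<in> set C" "y \<notin> S" "\<not> ?R x y" by blast
        obtain r where r: "r < length C" "C ! r = x" using x by (auto simp: in_set_conv_nth)
        define D where "D = rotate r C"
        have holeD: "is_hole E VH D" and D0: "D ! 0 = x" using hole_rotate[OF hole r(1)] r D_def by auto
        have setD: "set D = set C" and lenD: "length D = length C" using D_def by auto
        obtain j where j: "j < length D" "D ! j = y" using y setD by (metis in_set_conv_nth)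
        have j0: "j \<noteq> 0"
        proof
          assume "j = 0" then have "y = x" using j D0 by simp
          then show False using y(3) by simp
        qed
        have majD: "\<not> is_major E VH D s" using nmaj setD unfolding is_major_def nbr_on_def by simp
        have n22D: "\<not> is_22 E VH D s" using n22 setD unfolding is_22_def is_major_def nbr_on_def by simp
        have "\<exists>s1\<in>S. \<exists>s2\<in>S. s1 \<noteq> s2 \<and> \<not> E s1 s2 \<and>
            (\<exists>B1\<in>components E (VH - S). \<exists>B2\<in>components E (VH - S). B1 \<noteq> B2 \<and>
               {s1, s2} \<subseteq> nbhd E VH B1 \<and> {s1, s2} \<subseteq> nbhd E VH B2)"
        proof (rule core[OF holeD refl _ _ sym irr majD n22D sS(2) sV])
          show "even (length D)" using ev lenD by simp
          show "\<forall>D'. is_even_hole E VH D' \<longrightarrow> length D \<le> length D'" using short lenD by simp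
          show "D!0 \<notin> S" "D!j \<notin> S" using D0 x y j by auto
          show "0 < j" "j < length D" using j0 j by auto
          show "\<not> ?R (D!0) (D!j)" using D0 j y by simp
        qed
        then show False using nB2 by blast
      qed
    qed
  qed
qed

end
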